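(* Let $G=(V,E)$ be a graph on $n$ vertices with clique number $\omega(G)$, and let $C^{\mathsf{start}},C^{\mathsf{goal}}$ be cliques of $G$ with $|C^{\mathsf{start}}|=|C^{\mathsf{goal}}|=\omega(G)$. Let $X$ be a $(d,\lambda)$-expander graph on vertex set $V$, let $\ell=\lceil\log n\rceil$, and let $H=(W,F)$, $D^{\mathsf{start}}$, $D^{\mathsf{goal}}$ be as defined in the context. If $\mathrm{val}_G(C^{\mathsf{start}}\leftrightsquigarrow C^{\mathsf{goal}})\ge\omega(G)-1$, then \[\mathrm{val}_H(D^{\mathsf{start}}\leftrightsquigarrow D^{\mathsf{goal}})\ \ge\ |W|\cdot\left(\frac{\omega(G)-1}{|V|}-2\frac{\lambda}{d}\right)^{\ell}.\]
   Context: A $(d,\lambda)$-expander is a $d$-regular graph all of whose adjacency eigenvalues other than the largest have absolute value at most $\lambda$. $W$ is the set of all walks $\vec w=(w_1,\ldots,w_\ell)$ of length $\ell-1$ in $X$ (so $|W|=nd^{\ell-1}$); a walk is identified with its vertex set when writing $\vec w\subseteq C$ or $\vec w_1\cup\vec w_2$. $H$ has an edge between distinct $\vec w_1,\vec w_2\in W$ iff the subgraph of $G$ induced by $\vec w_1\cup\vec w_2$ is a clique. For a clique $C$ of $G$, $D_C:=\{\vec w\in W:\vec w\subseteq C\}$ (a clique of $H$); $D^{\mathsf{start}}:=D_{C^{\mathsf{start}}}$, $D^{\mathsf{goal}}:=D_{C^{\mathsf{goal}}}$. For a graph $K$ and cliques $C,C'$ of $K$, a reconfiguration sequence from $C$ to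 $C'$ is a sequence of cliques of $K$ starting at $C$, ending at $C'$, consecutive ones differing by adding or removing exactly one vertex; $\mathrm{val}_K(C\leftrightsquigarrow C')$ is the maximum over such sequences of the minimum clique size in the sequence.
   Formalization: The base $(\omega(G)-1)/|V|-2\lambda/d$ is also assumed nonnegative; log is base 2, and eigenvalues of X are counted with multiplicity, so a repeated eigenvalue d forces $d\le\lambda$. Apart from conventions, each condition added here is assumed in the paper as well or is needed for the statement above to hold. *)

theory Defs
  imports "HOL-Analysis.Analysis" "Jordan_Normal_Form.Char_Poly"
begin

definition simple_graph :: "'a set \<Rightarrow> ('a \<Rightarrow> 'a \<Rightarrow> bool) \<Rightarrow> bool" where
  "simple_graph V E \<longleftrightarrow> finite V \<and> (\<forall>u v. E u v \<longrightarrow> u \<in> V \<and> v \<in> V \<and> u \<noteq> v \<and> E v u)"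

definition is_clique :: "'a set \<Rightarrow> ('a \<Rightarrow> 'a \<Rightarrow> bool) \<Rightarrow> 'a set \<Rightarrow> bool" where
  "is_clique V E C \<longleftrightarrow> C \<subseteq> V \<and> (\<forall>u\<in>C. \<forall>v\<in>C. u \<noteq> v \<longrightarrow> E u v)"

definition clique_number :: "'a set \<Rightarrow> ('a \<Rightarrow> 'a \<Rightarrow> bool) \<Rightarrow> nat" where
  "clique_number V E = Max (card ` {C. is_clique V E C})"

definition reconf_seq :: "'a set \<Rightarrow> ('a \<Rightarrow> 'a \<Rightarrow> bool) \<Rightarrow> 'a set \<Rightarrow> 'a set \<Rightarrow> 'a set list \<Rightarrow> bool" where
  "reconf_seq V E C C' xs \<longleftrightarrow> xs \<noteq> [] \<and> hd xs = C \<and> last xs = C' \<and>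
     (\<forall>D\<in>set xs. is_clique V E D) \<and>
     (\<forall>i. Suc i < length xs \<longrightarrow>
        (\<exists>v. (v \<notin> xs!i \<and> xs!Suc i = insert v (xs!i)) \<or> (v \<notin> xs!Suc i \<and> xs!i = insert v (xs!Suc i))))"

definition reconf_val :: "'a set \<Rightarrow> ('a \<Rightarrow> 'a \<Rightarrow> bool) \<Rightarrow> 'a set \<Rightarrow> 'a set \<Rightarrow> nat" where
  "reconf_val V E C C' = Max {Min (card ` set xs) | xs. reconf_seq V E C C' xs}"

definition adj_mat :: "nat \<Rightarrow> (nat \<Rightarrow> nat \<Rightarrow> bool) \<Rightarrow> real mat" where
  "adj_mat n X = mat n n (\<lambda>(i, j). if X i j then 1 else 0)"

definition regular :: "nat \<Rightarrow> (nat \<Rightarrow> nat \<Rightarrow> bool) \<Rightarrow> nat \<Rightarrow> bool" where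
  "regular n X d \<longleftrightarrow> (\<forall>v<n. card {u. u < n \<and> X v u} = d)"

(* (d,lambda)-expander: d-regular simple graph on {0..<n} all of whose adjacency eigenvalues
   other than the largest one (= d, removed once, counted with algebraic multiplicity)
   have absolute value at most lambda *)
definition expander :: "nat \<Rightarrow> (nat \<Rightarrow> nat \<Rightarrow> bool) \<Rightarrow> nat \<Rightarrow> real \<Rightarrow> bool" where
  "expander n X d lam \<longleftrightarrow> simple_graph {0..<n} X \<and> regular n X d \<and>
     (\<forall>\<mu>. eigenvalue (adj_mat n X) \<mu> \<and> \<mu> \<noteq> real d \<longrightarrow> \<bar>\<mu>\<bar> \<le> lam) \<and>
     (order (real d) (char_poly (adj_mat n X)) \<ge> 2 \<longrightarrow> real d \<le> lam)"

definition walks :: "nat \<Rightarrow> (nat \<Rightarrow> nat \<Rightarrow> bool) \<Rightarrow> nat \<Rightarrow> nat list set" where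
  "walks n X l = {w. length w = l \<and> set w \<subseteq> {0..<n} \<and> successively X w}"

definition walk_adj :: "(nat \<Rightarrow> nat \<Rightarrow> bool) \<Rightarrow> nat \<Rightarrow> nat list \<Rightarrow> nat list \<Rightarrow> bool" where
  "walk_adj E n w1 w2 \<longleftrightarrow> w1 \<noteq> w2 \<and> is_clique {0..<n} E (set w1 \<union> set w2)"

definition D_of :: "nat \<Rightarrow> (nat \<Rightarrow> nat \<Rightarrow> bool) \<Rightarrow> nat \<Rightarrow> nat set \<Rightarrow> nat list set" where
  "D_of n X l C = {w \<in> walks n X l. set w \<subseteq> C}"

end

theory Submission
  imports Defs
begin

lemma jensen_ln:
  fixes p a :: "'i \<Rightarrow> real"
  assumes "finite I" "I \<noteq> {}" "\<And>i. i \<in> I \<Longrightarrow> p i \<ge> 0" "sum p I = 1" "\<And>i. i \<in> I \<Longrightarrow> a i > 0"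
  shows "(\<Sum>i\<in>I. p i * ln (a i)) \<le> ln (\<Sum>i\<in>I. p i * a i)"
  using concave_on_sum[OF assms(1,2) ln_concave, of p a] assms by auto

definition cnt :: "(nat \<Rightarrow> nat \<Rightarrow> bool) \<Rightarrow> nat set \<Rightarrow> nat \<Rightarrow> nat \<Rightarrow> nat" where
  "cnt X S k v = card {w. length w = k \<and> set w \<subseteq> S \<and> successively X (v # w)}"

definition wk :: "(nat \<Rightarrow> nat \<Rightarrow> bool) \<Rightarrow> nat set \<Rightarrow> nat \<Rightarrow> nat list set" where
  "wk X S k = {w. length w = k \<and> set w \<subseteq> S \<and> successively X w}"

lemma finite_lists_in: "finite S \<Longrightarrow> finite {w. length w = k \<and> set w \<subseteq> S \<and> P w}"
  by (rule finite_subset[OF _ finite_lists_length_eq[of S k]]) auto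

lemma cnt_0: "cnt X S 0 v = 1"
proof -
  have "{w. length w = 0 \<and> set w \<subseteq> S \<and> successively X (v # w)} = {[]}" by auto
  then show ?thesis unfolding cnt_def by simp
qed

lemma cnt_Suc:
  assumes "finite S"
  shows "cnt X S (Suc k) v = (\<Sum>u\<in>{u\<in>S. X v u}. cnt X S k u)"
proof -
  have eq: "{w. length w = Suc k \<and> set w \<subseteq> S \<and> successively X (v # w)} =
    (\<Union>u\<in>{u\<in>S. X v u}. Cons u ` {w. length w = k \<and> set w \<subseteq> S \<and> successively X (u # w)})"
  proof (rule equalityI, rule subsetI)
    fix w assume "w \<in> {w. length w = Suc k \<and> set w \<subseteq> S \<and> successively X (v # w)}"
    then obtain u w' where "w = u # w'" "length w' = k" "set w' \<subseteq> S" "u \<in> S" "X v u" "successively X (u # w')"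
      by (cases w) auto
    then show "w \<in> (\<Union>u\<in>{u\<in>S. X v u}. Cons u ` {w. length w = k \<and> set w \<subseteq> S \<and> successively X (u # w)})"
      by auto
  qed auto
  have "cnt X S (Suc k) v = card (\<Union>u\<in>{u\<in>S. X v u}. Cons u ` {w. length w = k \<and> set w \<subseteq> S \<and> successively X (u # w)})"
    unfolding cnt_def eq ..
  also have "\<dots> = (\<Sum>u\<in>{u\<in>S. X v u}. card (Cons u ` {w. length w = k \<and> set w \<subseteq> S \<and> successively X (u # w)}))"
    by (rule card_UN_disjoint) (auto intro!: finite_imageI finite_lists_in assms)
  also have "\<dots> = (\<Sum>u\<in>{u\<in>S. X v u}. cnt X S k u)"
    unfolding cnt_def by (intro sum.cong refl card_image) auto
  finally show ?thesis .
qed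

lemma wk_0: "card (wk X S 0) = 1"
proof -
  have "{w. length w = 0 \<and> set w \<subseteq> S \<and> successively X w} = {[]}" by auto
  then show ?thesis unfolding wk_def by simp
qed

lemma wk_Suc:
  assumes "finite S"
  shows "card (wk X S (Suc k)) = (\<Sum>v\<in>S. cnt X S k v)"
proof -
  have eq: "wk X S (Suc k) =
    (\<Union>v\<in>S. Cons v ` {w. length w = k \<and> set w \<subseteq> S \<and> successively X (v # w)})"
  proof (rule equalityI, rule subsetI)
    fix w assume "w \<in> wk X S (Suc k)"
    then obtain u w' where "w = u # w'" "length w' = k" "set w' \<subseteq> S" "u \<in> S" "successively X (u # w')"
      unfolding wk_def by (cases w) auto
    then show "w \<in> (\<Union>v\<in>S. Cons v ` {w. length w = k \<and> set w \<subseteq> S \<and> successively X (v # w)})"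
      by auto
  qed (auto simp: wk_def)
  have "card (wk X S (Suc k)) = (\<Sum>v\<in>S. card (Cons v ` {w. length w = k \<and> set w \<subseteq> S \<and> successively X (v # w)}))"
    unfolding eq by (rule card_UN_disjoint) (auto intro!: finite_imageI finite_lists_in assms)
  also have "\<dots> = (\<Sum>v\<in>S. cnt X S k v)"
    unfolding cnt_def by (intro sum.cong refl card_image) auto
  finally show ?thesis .
qed

lemma double_count_sym:
  fixes f :: "nat \<Rightarrow> real"
  assumes "finite T" "\<And>u v. X u v \<Longrightarrow> X v u"
  shows "(\<Sum>v\<in>T. \<Sum>u\<in>{u\<in>T. X v u}. f u) = (\<Sum>u\<in>T. real (card {v\<in>T. X u v}) * f u)"
proof -
  have "(\<Sum>v\<in>T. \<Sum>u\<in>{u\<in>T. X v u}. f u) = (\<Sum>v\<in>T. \<Sum>u\<in>T. (if X v u then f u else 0))"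
    by (intro sum.cong refl sum.inter_filter assms(1))
  also have "\<dots> = (\<Sum>u\<in>T. \<Sum>v\<in>T. (if X v u then f u else 0))"
    by (rule sum.swap)
  also have "\<dots> = (\<Sum>u\<in>T. real (card {v\<in>T. X u v}) * f u)"
  proof (intro sum.cong refl)
    fix u assume "u \<in> T"
    have "(\<Sum>v\<in>T. (if X v u then f u else 0)) = (\<Sum>v\<in>{v\<in>T. X v u}. f u)"
      by (subst sum.inter_filter[OF assms(1), symmetric]) simp
    also have "{v\<in>T. X v u} = {v\<in>T. X u v}" using assms(2) by blast
    finally show "(\<Sum>v\<in>T. (if X v u then f u else 0)) = real (card {v\<in>T. X u v}) * f u"
      by simp
  qed
  finally show ?thesis .
qed

lemma blakley_roy:
  assumes fin: "finite S" and ne: "S \<noteq> {}" and sym: "\<And>u v. X u v \<Longrightarrow> X v u"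
  shows "real (\<Sum>v\<in>S. cnt X S k v) \<ge>
     real (card S) * (real (\<Sum>v\<in>S. card {u\<in>S. X v u}) / real (card S)) ^ k"
proof -
  define dg where "dg v = card {u\<in>S. X v u}" for v
  define T where "T = {v\<in>S. dg v > 0}"
  define E where "E = (\<Sum>v\<in>S. dg v)"
  define s where "s = card S"
  have s0: "s > 0" using fin ne by (simp add: s_def card_gt_0_iff)
  have finT: "finite T" using fin by (simp add: T_def)
  have TS: "T \<subseteq> S" by (auto simp: T_def)
  have nbT: "u \<in> T" if "v \<in> T" "u \<in> S" "X v u" for u v
  proof -
    have "v \<in> {w\<in>S. X u w}" using that sym TS by auto
    hence "dg u > 0" unfolding dg_def using fin by (auto simp: card_gt_0_iff)
    thus ?thesis using that by (simp add: T_def)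
  qed
  have nbeq: "{u\<in>S. X v u} = {u\<in>T. X v u}" if "v \<in> T" for v
    using nbT[OF that] TS by auto
  have L1: "cnt X S (Suc j) v = 0" if "v \<in> S" "v \<notin> T" for v j
  proof -
    have e: "{u\<in>S. X v u} = {}" using that fin by (auto simp: T_def dg_def card_gt_0_iff)
    show ?thesis by (simp only: cnt_Suc[OF fin] e sum.empty)
  qed
  have L2: "cnt X S j v \<ge> 1" if "v \<in> T" for v j
    using that
  proof (induction j arbitrary: v)
    case 0 then show ?case by (simp add: cnt_0)
  next
    case (Suc j)
    have "card {u\<in>S. X v u} > 0" using Suc.prems by (simp add: T_def dg_def)
    then have "{u\<in>S. X v u} \<noteq> {}" by (metis card.empty less_irrefl)
    then obtain u where u: "u \<in> S" "X v u" by auto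
    have "u \<in> T" using nbT[OF Suc.prems u] .
    hence "1 \<le> cnt X S j u" using Suc.IH by blast
    also have "\<dots> \<le> (\<Sum>u\<in>{u\<in>S. X v u}. cnt X S j u)"
      by (rule member_le_sum) (use u fin in auto)
    finally show ?case by (simp add: cnt_Suc[OF fin])
  qed
  have dgpos: "real (dg v) > 0" if "v \<in> T" for v using that by (simp add: T_def)
  have L3: "(\<Sum>v\<in>T. real (dg v) * ln (real (cnt X S (Suc j) v) / real (dg v)))
        \<ge> real j * (\<Sum>v\<in>T. real (dg v) * ln (real (dg v)))" for j
  proof (induction j)
    case 0
    have "cnt X S (Suc 0) v = dg v" for v by (simp add: cnt_Suc[OF fin] cnt_0 dg_def)
    then show ?case by (auto intro!: sum_nonneg simp: T_def)
  next
    case (Suc j)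
    have step: "real (dg v) * ln (real (cnt X S (Suc (Suc j)) v) / real (dg v))
       \<ge> (\<Sum>u\<in>{u\<in>T. X v u}. ln (real (cnt X S (Suc j) u)))" if v: "v \<in> T" for v
    proof -
      let ?N = "{u\<in>T. X v u}"
      have finN: "finite ?N" using finT by simp
      have cardN: "card ?N = dg v" using nbeq[OF v] by (simp add: dg_def)
      have cposN: "0 < real (cnt X S (Suc j) u)" if "u \<in> ?N" for u
      proof -
        have "u \<in> T" using that by auto
        then have "1 \<le> cnt X S (Suc j) u" by (rule L2)
        then show ?thesis by simp
      qed
      have neN: "?N \<noteq> {}" using cardN dgpos[OF v] by (metis card.empty of_nat_0 less_irrefl)
      have "(\<Sum>u\<in>?N. (1 / real (dg v)) * ln (real (cnt X S (Suc j) u)))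
            \<le> ln (\<Sum>u\<in>?N. (1 / real (dg v)) * real (cnt X S (Suc j) u))"
        by (rule jensen_ln[OF finN neN]) (use cardN dgpos[OF v] cposN in auto)
      also have "(\<Sum>u\<in>?N. (1 / real (dg v)) * real (cnt X S (Suc j) u))
          = real (cnt X S (Suc (Suc j)) v) / real (dg v)"
      proof -
        have "cnt X S (Suc (Suc j)) v = (\<Sum>u\<in>?N. cnt X S (Suc j) u)"
          using cnt_Suc[OF fin, of X "Suc j" v] nbeq[OF v] by simp
        then show ?thesis by (simp add: sum_divide_distrib)
      qed
      finally have "(1 / real (dg v)) * (\<Sum>u\<in>?N. ln (real (cnt X S (Suc j) u)))
          \<le> ln (real (cnt X S (Suc (Suc j)) v) / real (dg v))"
        by (simp add: sum_distrib_left)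
      then show ?thesis using dgpos[OF v] by (simp add: field_simps)
    qed
    have dcT: "card {v\<in>T. X u v} = dg u" if "u \<in> T" for u
      using nbeq[OF that] by (simp add: dg_def)
    have "(\<Sum>v\<in>T. real (dg v) * ln (real (cnt X S (Suc (Suc j)) v) / real (dg v)))
        \<ge> (\<Sum>v\<in>T. \<Sum>u\<in>{u\<in>T. X v u}. ln (real (cnt X S (Suc j) u)))"
      by (rule sum_mono) (rule step)
    also have "(\<Sum>v\<in>T. \<Sum>u\<in>{u\<in>T. X v u}. ln (real (cnt X S (Suc j) u)))
        = (\<Sum>u\<in>T. real (dg u) * ln (real (cnt X S (Suc j) u)))"
      using double_count_sym[OF finT sym] dcT by simp
    also have "\<dots> = (\<Sum>u\<in>T. real (dg u) * ln (real (cnt X S (Suc j) u) / real (dg u)))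
                 + (\<Sum>u\<in>T. real (dg u) * ln (real (dg u)))"
    proof -
      have "real (dg u) * ln (real (cnt X S (Suc j) u)) =
         real (dg u) * ln (real (cnt X S (Suc j) u) / real (dg u)) + real (dg u) * ln (real (dg u))"
        if "u \<in> T" for u
      proof -
        have c: "real (cnt X S (Suc j) u) > 0" using L2[OF that, of "Suc j"] by simp
        show ?thesis using c dgpos[OF that] by (simp add: ln_div algebra_simps)
      qed
      then show ?thesis by (simp add: sum.distrib[symmetric])
    qed
    finally show ?case using Suc.IH by (simp add: algebra_simps)
  qed
  show ?thesis
  proof (cases k)
    case 0 then show ?thesis by (simp add: cnt_0 s_def)
  next
    case (Suc j)
    show ?thesis
    proof (cases "E = 0")
      case True
      then show ?thesis using Suc by (simp add: E_def dg_def[symmetric] sum_nonneg)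
    next
      case False
      have ET: "E = (\<Sum>v\<in>T. dg v)"
        unfolding E_def using fin TS by (intro sum.mono_neutral_right) (auto simp: T_def)
      have Epos: "real E > 0" using False by simp
      have Tne: "T \<noteq> {}" using False ET by auto
      have t0: "card T > 0" using Tne finT by (simp add: card_gt_0_iff)
      have ts: "card T \<le> s" using card_mono[OF fin TS] by (simp add: s_def)
      define p where "p v = real (dg v) / real E" for v
      have p0: "p v \<ge> 0" for v by (simp add: p_def)
      have p1: "sum p T = 1" using Epos by (simp add: p_def ET sum_divide_distrib[symmetric])
      have cs: "(\<Sum>v\<in>S. cnt X S k v) = (\<Sum>v\<in>T. cnt X S k v)"
        using fin TS L1 Suc by (intro sum.mono_neutral_right) auto
      have cpos: "real (cnt X S k v) / real (dg v) > 0" if "v \<in> T" for v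
        using L2[OF that, of k] dgpos[OF that] by simp
      have J1: "(\<Sum>v\<in>T. p v * ln (real (cnt X S k v) / real (dg v)))
          \<le> ln (\<Sum>v\<in>T. p v * (real (cnt X S k v) / real (dg v)))"
        by (rule jensen_ln[OF finT Tne p0 p1 cpos])
      have eq1: "(\<Sum>v\<in>T. p v * (real (cnt X S k v) / real (dg v))) = real (\<Sum>v\<in>T. cnt X S k v) / real E"
        using dgpos by (simp add: p_def sum_divide_distrib)
      have eq2: "(\<Sum>v\<in>T. p v * ln (real (cnt X S k v) / real (dg v)))
          = (\<Sum>v\<in>T. real (dg v) * ln (real (cnt X S (Suc j) v) / real (dg v))) / real E"
        by (simp add: p_def Suc sum_divide_distrib)
      have J2: "(\<Sum>v\<in>T. p v * ln (1 / real (dg v))) \<le> ln (\<Sum>v\<in>T. p v * (1 / real (dg v)))"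
        by (rule jensen_ln[OF finT Tne p0 p1]) (use dgpos in auto)
      have eq3: "(\<Sum>v\<in>T. p v * (1 / real (dg v))) = real (card T) / real E"
        using dgpos by (simp add: p_def)
      have eq4: "(\<Sum>v\<in>T. p v * ln (1 / real (dg v))) = - ((\<Sum>v\<in>T. real (dg v) * ln (real (dg v))) / real E)"
        using dgpos by (simp add: p_def ln_div sum_divide_distrib sum_negf)
      have M: "(\<Sum>v\<in>T. real (dg v) * ln (real (dg v))) / real E \<ge> ln (real E / real (card T))"
        using J2 eq3 eq4 Epos t0 by (simp add: ln_div)
      have M2: "ln (real E / real (card T)) \<ge> ln (real E / real s)"
        using Epos t0 ts by (simp add: ln_div)
      have G1: "ln (real (\<Sum>v\<in>T. cnt X S k v) / real E)
          \<ge> real j * ((\<Sum>v\<in>T. real (dg v) * ln (real (dg v))) / real E)"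
      proof -
        have a: "real j * (\<Sum>v\<in>T. real (dg v) * ln (real (dg v))) / real E
           \<le> (\<Sum>v\<in>T. real (dg v) * ln (real (cnt X S (Suc j) v) / real (dg v))) / real E"
          using divide_right_mono[OF L3[of j], of "real E"] Epos by simp
        have b: "(\<Sum>v\<in>T. real (dg v) * ln (real (cnt X S (Suc j) v) / real (dg v))) / real E
            \<le> ln (real (\<Sum>v\<in>T. cnt X S k v) / real E)"
          using J1 unfolding eq1 eq2 .
        show ?thesis using a b by simp
      qed
      have G2: "real j * ((\<Sum>v\<in>T. real (dg v) * ln (real (dg v))) / real E) \<ge> real j * ln (real E / real s)"
        using M M2 by (intro mult_left_mono) auto
      have "ln (real (\<Sum>v\<in>T. cnt X S k v) / real E) \<ge> ln ((real E / real s) ^ j)"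
        using G1 G2 Epos s0 by (simp add: ln_realpow)
      moreover have "real (\<Sum>v\<in>T. cnt X S k v) > 0"
      proof -
        obtain v where v: "v \<in> T" using Tne by auto
        have "1 \<le> cnt X S k v" using L2[OF v] .
        also have "\<dots> \<le> (\<Sum>v\<in>T. cnt X S k v)" by (rule member_le_sum) (use v finT in auto)
        finally have "0 < (\<Sum>v\<in>T. cnt X S k v)" by simp
        then show ?thesis by (simp only: of_nat_0_less_iff)
      qed
      ultimately have "real (\<Sum>v\<in>T. cnt X S k v) / real E \<ge> (real E / real s) ^ j"
        using Epos s0 by (subst (asm) ln_le_cancel_iff) auto
      hence "real (\<Sum>v\<in>T. cnt X S k v) \<ge> real E * (real E / real s) ^ j"
        using Epos by (simp add: field_simps)
      also have "real E * (real E / real s) ^ j = real s * (real E / real s) ^ k"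
        using s0 Suc by (simp add: field_simps)
      finally show ?thesis using cs by (simp add: s_def E_def dg_def)
    qed
  qed
qed

definition am :: "(nat \<Rightarrow> nat \<Rightarrow> bool) \<Rightarrow> nat \<Rightarrow> nat \<Rightarrow> real" where
  "am X i j = (if X i j then 1 else 0)"

definition Bf :: "nat \<Rightarrow> (nat \<Rightarrow> nat \<Rightarrow> bool) \<Rightarrow> (nat \<Rightarrow> real) \<Rightarrow> (nat \<Rightarrow> real) \<Rightarrow> real" where
  "Bf n X y z = (\<Sum>i<n. \<Sum>j<n. am X i j * y i * z j)"

lemma compact_box:
  "compact (Pi UNIV (\<lambda>i. if i < n then {-1..(1::real)} else {0}))"
proof -
  have "compactin (product_topology (\<lambda>i. euclidean) UNIV) (PiE UNIV (\<lambda>i. if i < n then {-1..(1::real)} else {0}))"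
    by (subst compactin_PiE) auto
  then show ?thesis by (simp add: euclidean_product_topology PiE_UNIV_domain)
qed

lemma cont_Bf: "continuous_on UNIV (\<lambda>y. Bf n X y y)"
  unfolding Bf_def by (intro continuous_intros continuous_on_product_coordinates)

lemma quad_lin_zero:
  fixes a b :: real
  assumes "\<And>t. a * t + b * t\<^sup>2 \<ge> 0"
  shows "a = 0"
proof (rule ccontr)
  assume a: "a \<noteq> 0"
  define c where "c = \<bar>b\<bar> + 1"
  have c: "c > 0" "b \<le> c" by (auto simp: c_def)
  define t where "t = - a / (2 * c)"
  have "a * t + b * t\<^sup>2 = - a\<^sup>2 / (2 * c) + b * a\<^sup>2 / (4 * c\<^sup>2)"
    unfolding t_def using c by (simp add: power2_eq_square field_simps)
  also have "b * a\<^sup>2 / (4 * c\<^sup>2) \<le> a\<^sup>2 / (4 * c)"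
  proof -
    have "b * a\<^sup>2 \<le> c * a\<^sup>2" using c by (intro mult_right_mono) auto
    hence "b * a\<^sup>2 / (4 * c\<^sup>2) \<le> c * a\<^sup>2 / (4 * c\<^sup>2)"
      by (intro divide_right_mono) auto
    also have "\<dots> = a\<^sup>2 / (4 * c)" using c by (simp add: power2_eq_square field_simps)
    finally show ?thesis .
  qed
  finally have "a * t + b * t\<^sup>2 \<le> - a\<^sup>2 / (2 * c) + a\<^sup>2 / (4 * c)" by simp
  also have "\<dots> = - a\<^sup>2 / (4 * c)" using c by (simp add: field_simps)
  also have "\<dots> < 0" using a c by simp
  finally show False using assms[of t] by simp
qed

lemma Bf_sym:
  assumes "\<And>i j. am X i j = am X j i"
  shows "Bf n X y z = Bf n X z y"
  unfolding Bf_def by (subst sum.swap) (simp add: assms mult.commute mult.left_commute)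

lemma Bf_expand:
  "Bf n X (\<lambda>i. y i + t * z i) (\<lambda>i. y i + t * z i) = Bf n X y y + t * (Bf n X y z + Bf n X z y) + t\<^sup>2 * Bf n X z z"
  unfolding Bf_def by (simp add: algebra_simps power2_eq_square sum.distrib sum_distrib_left)

lemma Bf_left: "Bf n X z y = (\<Sum>i<n. z i * (\<Sum>j<n. am X i j * y j))"
  unfolding Bf_def by (simp add: sum_distrib_left algebra_simps)

lemma Bf_cong:
  assumes "\<And>i. i < n \<Longrightarrow> y i = y' i"
  shows "Bf n X y y = Bf n X y' y'"
  unfolding Bf_def using assms by (intro sum.cong refl) auto

lemma Bf_scale: "Bf n X (\<lambda>i. c * y i) (\<lambda>i. c * y i) = c\<^sup>2 * Bf n X y y"
  unfolding Bf_def by (simp add: sum_distrib_left algebra_simps power2_eq_square)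

lemma sum_sq_expand:
  fixes y z :: "nat \<Rightarrow> real"
  shows "(\<Sum>i<n. (y i + t * z i)\<^sup>2) = (\<Sum>i<n. (y i)\<^sup>2) + t * (2 * (\<Sum>i<n. y i * z i)) + t\<^sup>2 * (\<Sum>i<n. (z i)\<^sup>2)"
  by (simp add: algebra_simps power2_eq_square sum.distrib sum_distrib_left)

lemma sum_indicator_card: "finite A \<Longrightarrow> (\<Sum>i\<in>A. am X i j) = real (card {i\<in>A. X i j})"
proof -
  assume f: "finite A"
  have "A \<inter> {i. X i j} = {i\<in>A. X i j}" by auto
  then show ?thesis unfolding am_def using f by (simp add: sum.If_cases)
qed

lemma rayleigh:
  assumes X: "expander n X d lam" and d0: "d > 0" and n0: "n > 0"
  shows "lam \<ge> 0 \<and> (\<forall>y. (\<Sum>i<n. y i) = 0 \<longrightarrow> Bf n X y y \<ge> - lam * (\<Sum>i<n. (y i)\<^sup>2))"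
proof -
  have sg: "simple_graph {0..<n} X" and reg: "regular n X d"
    and ev: "\<And>\<mu>. eigenvalue (adj_mat n X) \<mu> \<Longrightarrow> \<mu> \<noteq> real d \<Longrightarrow> \<bar>\<mu>\<bar> \<le> lam"
    using X unfolding expander_def by auto
  have sym: "X i j \<Longrightarrow> X j i" for i j using sg unfolding simple_graph_def by auto
  have irr: "\<not> X i i" for i using sg unfolding simple_graph_def by auto
  have amsym: "am X i j = am X j i" for i j unfolding am_def using sym by auto
  have deg: "card {u. u < n \<and> X v u} = d" if "v < n" for v using reg that unfolding regular_def by auto
  have n2: "n \<ge> 2"
  proof -
    have "card {u. u < n \<and> X 0 u} > 0" using deg[OF n0] d0 by simp
    then obtain u where "u < n" "X 0 u" by (metis (no_types, lifting) Collect_empty_eq card.empty less_irrefl)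
    moreover have "u \<noteq> 0" using irr \<open>X 0 u\<close> by metis
    ultimately show ?thesis by linarith
  qed
  have colsum: "(\<Sum>i<n. am X i j) = real d" if "j < n" for j
  proof -
    have "(\<Sum>i<n. am X i j) = real (card {i\<in>{..<n}. X i j})" by (rule sum_indicator_card) simp
    also have "{i\<in>{..<n}. X i j} = {u. u < n \<and> X j u}" using sym by auto
    finally show ?thesis using deg[OF that] by simp
  qed
  define B where "B = Pi UNIV (\<lambda>i. if i < n then {-1..(1::real)} else {0})"
  define K where "K = B \<inter> {y. (\<Sum>i<n. (y i)\<^sup>2) = 1} \<inter> {y. (\<Sum>i<n. y i) = 0}"
  have cK: "compact K"
  proof -
    have "closed ({y::nat\<Rightarrow>real. (\<Sum>i<n. (y i)\<^sup>2) = 1} \<inter> {y. (\<Sum>i<n. y i) = 0})"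
      by (intro closed_Int closed_Collect_eq continuous_intros continuous_on_product_coordinates)
    then show ?thesis unfolding K_def B_def using compact_box[of n]
      by (simp add: Int_assoc compact_Int_closed)
  qed
  define e where "e = (\<lambda>i::nat. if i = 0 then 1 / sqrt 2 else if i = 1 then - 1 / sqrt 2 else (0::real))"
  have sum01: "(\<Sum>i<n. f i) = f 0 + f 1" if "\<And>i. i \<ge> 2 \<Longrightarrow> f i = 0" for f :: "nat \<Rightarrow> real"
  proof -
    have "(\<Sum>i<n. f i) = (\<Sum>i\<in>{0,1}. f i)"
      using n2 that by (intro sum.mono_neutral_right) auto
    then show ?thesis by simp
  qed
  have eK: "e \<in> K"
  proof -
    have e1: "(\<Sum>i<n. (e i)\<^sup>2) = 1" by (subst sum01) (auto simp: e_def power2_eq_square)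
    have e2: "(\<Sum>i<n. e i) = 0" by (subst sum01) (auto simp: e_def)
    have s2: "- 1 \<le> sqrt (2::real)" by (rule order_trans[of _ 0]) auto
    have "e \<in> B" unfolding B_def e_def using n2 s2
      by (auto simp: divide_simps)
    then show ?thesis using e1 e2 unfolding K_def by auto
  qed
  obtain y0 where y0K: "y0 \<in> K" and y0min: "\<And>y. y \<in> K \<Longrightarrow> Bf n X y0 y0 \<le> Bf n X y y"
    using continuous_attains_inf[OF cK _ continuous_on_subset[OF cont_Bf subset_UNIV]] eK by blast
  define m where "m = Bf n X y0 y0"
  have y0s: "(\<Sum>i<n. (y0 i)\<^sup>2) = 1" "(\<Sum>i<n. y0 i) = 0" using y0K by (auto simp: K_def)
  have scale: "Bf n X y y \<ge> m * (\<Sum>i<n. (y i)\<^sup>2)" if ys: "(\<Sum>i<n. y i) = 0" for y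
  proof (cases "(\<Sum>i<n. (y i)\<^sup>2) = 0")
    case True
    hence "y i = 0" if "i < n" for i using that by (simp add: sum_nonneg_eq_0_iff)
    hence "Bf n X y y = Bf n X (\<lambda>_. 0) (\<lambda>_. 0)" by (intro Bf_cong) auto
    then show ?thesis using True by (simp add: Bf_def)
  next
    case False
    define q where "q = (\<Sum>i<n. (y i)\<^sup>2)"
    have q0: "q > 0" using False by (simp add: q_def sum_nonneg order_le_neq_trans)
    define r where "r = sqrt q"
    have r0: "r > 0" using q0 by (simp add: r_def)
    have rq: "r\<^sup>2 = q" using q0 by (simp add: r_def)
    define z where "z i = (if i < n then y i / r else 0)" for i
    have zsq: "(\<Sum>i<n. (z i)\<^sup>2) = 1"
    proof -
      have "(\<Sum>i<n. (z i)\<^sup>2) = (\<Sum>i<n. (y i)\<^sup>2 / r\<^sup>2)"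
        by (intro sum.cong refl) (simp add: z_def power_divide)
      also have "\<dots> = q / r\<^sup>2" by (simp add: q_def sum_divide_distrib)
      finally show ?thesis using rq q0 by simp
    qed
    have zK: "z \<in> K"
    proof -
      have "(\<Sum>i<n. z i) = (\<Sum>i<n. y i) / r" by (simp add: z_def sum_divide_distrib)
      hence s0: "(\<Sum>i<n. z i) = 0" using ys by simp
      have "z i \<in> {-1..1}" if "i < n" for i
      proof -
        have "(z i)\<^sup>2 \<le> (\<Sum>i<n. (z i)\<^sup>2)" by (rule member_le_sum) (use that in auto)
        hence "(z i)\<^sup>2 \<le> 1\<^sup>2" using zsq by simp
        hence "\<bar>z i\<bar> \<le> \<bar>1\<bar>" by (simp only: abs_le_square_iff)
        hence "\<bar>z i\<bar> \<le> 1" by simp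
        then show ?thesis by auto
      qed
      hence "z \<in> B" unfolding B_def by (auto simp: z_def)
      then show ?thesis using s0 zsq unfolding K_def by auto
    qed
    have "Bf n X z z = Bf n X (\<lambda>i. (1 / r) * y i) (\<lambda>i. (1 / r) * y i)"
      by (intro Bf_cong) (simp add: z_def)
    also have "\<dots> = (1 / r)\<^sup>2 * Bf n X y y" by (rule Bf_scale)
    also have "\<dots> = Bf n X y y / q" by (simp add: power_divide rq)
    finally have "m \<le> Bf n X y y / q" using y0min[OF zK] by (simp add: m_def)
    then show ?thesis using q0 by (simp add: q_def field_simps)
  qed
  have mle0: "m \<le> 0"
  proof -
    define z where "z = (\<lambda>i::nat. if i = 0 then 1 else if i = 1 then - 1 else (0::real))"
    have "(\<Sum>i<n. z i) = 0" by (subst sum01) (auto simp: z_def)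
    hence h1: "Bf n X z z \<ge> m * (\<Sum>i<n. (z i)\<^sup>2)" by (rule scale)
    have h2: "(\<Sum>i<n. (z i)\<^sup>2) = 2" by (subst sum01) (auto simp: z_def)
    have h3: "Bf n X z z = - 2 * am X 0 1"
    proof -
      have "Bf n X z z = (\<Sum>i<n. z i * (\<Sum>j<n. am X i j * z j))" by (rule Bf_left)
      also have "\<dots> = z 0 * (\<Sum>j<n. am X 0 j * z j) + z 1 * (\<Sum>j<n. am X 1 j * z j)"
        by (subst sum01) (auto simp: z_def)
      also have "\<dots> = - 2 * am X 0 1"
        by (subst (1 2) sum01) (auto simp: z_def am_def irr intro: sym)
      finally show ?thesis .
    qed
    have h4: "am X 0 1 \<ge> 0" by (simp add: am_def)
    have "m * 2 \<le> - 2 * am X 0 1" using h1 unfolding h2 h3 .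
    then show ?thesis using h4 by linarith
  qed
  define Ay where "Ay i = (\<Sum>j<n. am X i j * y0 j)" for i
  define r where "r i = Ay i - m * y0 i" for i
  have claim1: "(\<Sum>i<n. z i * r i) = 0" if zs: "(\<Sum>i<n. z i) = 0" for z
  proof -
    have "2 * (\<Sum>i<n. z i * r i) * t + (Bf n X z z - m * (\<Sum>i<n. (z i)\<^sup>2)) * t\<^sup>2 \<ge> 0" for t
    proof -
      have "(\<Sum>i<n. y0 i + t * z i) = 0" using y0s zs by (simp add: sum.distrib sum_distrib_left[symmetric])
      hence "Bf n X (\<lambda>i. y0 i + t * z i) (\<lambda>i. y0 i + t * z i) \<ge> m * (\<Sum>i<n. (y0 i + t * z i)\<^sup>2)"
        by (rule scale)
      hence I: "m + t * (2 * Bf n X z y0) + t\<^sup>2 * Bf n X z z \<ge> m * (1 + t * (2 * (\<Sum>i<n. y0 i * z i)) + t\<^sup>2 * (\<Sum>i<n. (z i)\<^sup>2))"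
        unfolding Bf_expand sum_sq_expand y0s m_def using Bf_sym[of X n y0 z, OF amsym] by simp
      have e1: "Bf n X z y0 = (\<Sum>i<n. z i * Ay i)" unfolding Ay_def by (rule Bf_left)
      have e2: "(\<Sum>i<n. z i * Ay i) = (\<Sum>i<n. z i * r i) + m * (\<Sum>i<n. y0 i * z i)"
        by (simp add: r_def algebra_simps sum_subtractf sum_distrib_left)
      define Sr where "Sr = (\<Sum>i<n. z i * r i)"
      define S1 where "S1 = (\<Sum>i<n. y0 i * z i)"
      define Sz where "Sz = (\<Sum>i<n. (z i)\<^sup>2)"
      define Bz where "Bz = Bf n X z z"
      have I2: "m + t * (2 * (Sr + m * S1)) + t\<^sup>2 * Bz \<ge> m * (1 + t * (2 * S1) + t\<^sup>2 * Sz)"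
        using I unfolding e1 e2 Sr_def[symmetric] S1_def[symmetric] Sz_def[symmetric] Bz_def[symmetric] .
      have "2 * Sr * t + (Bz - m * Sz) * t\<^sup>2 \<ge> 0"
        using I2 by (simp add: algebra_simps)
      then show ?thesis unfolding Sr_def Bz_def Sz_def .
    qed
    hence "2 * (\<Sum>i<n. z i * r i) = 0" by (rule quad_lin_zero)
    then show ?thesis by simp
  qed
  have rsum: "(\<Sum>i<n. r i) = 0"
  proof -
    have "(\<Sum>i<n. Ay i) = (\<Sum>j<n. y0 j * (\<Sum>i<n. am X i j))"
      unfolding Ay_def by (subst sum.swap) (simp add: sum_distrib_left sum_distrib_right algebra_simps)
    also have "\<dots> = (\<Sum>j<n. y0 j * real d)" by (intro sum.cong refl) (simp add: colsum)
    also have "\<dots> = 0" using y0s by (simp add: sum_distrib_right[symmetric])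
    finally show ?thesis using y0s by (simp add: r_def sum_subtractf sum_distrib_left[symmetric])
  qed
  have "(\<Sum>i<n. r i * r i) = 0" using claim1[OF rsum] .
  hence r0: "r i = 0" if "i < n" for i
    using that by (simp add: sum_nonneg_eq_0_iff)
  have eig: "eigenvalue (adj_mat n X) m"
  proof -
    define v where "v = vec n y0"
    have A: "adj_mat n X \<in> carrier_mat n n" by (simp add: adj_mat_def)
    have v: "v \<in> carrier_vec n" by (simp add: v_def)
    have v0: "v \<noteq> 0\<^sub>v n"
    proof
      assume "v = 0\<^sub>v n"
      hence "y0 i = 0" if "i < n" for i using that by (metis index_vec index_zero_vec(1) v_def)
      hence "(\<Sum>i<n. (y0 i)\<^sup>2) = 0" by simp
      thus False using y0s by simp
    qed
    have "adj_mat n X *\<^sub>v v = m \<cdot>\<^sub>v v"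
    proof (rule eq_vecI)
      show "dim_vec (adj_mat n X *\<^sub>v v) = dim_vec (m \<cdot>\<^sub>v v)" by (simp add: adj_mat_def v_def)
      fix i assume "i < dim_vec (m \<cdot>\<^sub>v v)"
      hence i: "i < n" by (simp add: v_def)
      have "(adj_mat n X *\<^sub>v v) $ i = (\<Sum>j<n. am X i j * y0 j)"
        using i by (simp add: adj_mat_def v_def scalar_prod_def am_def lessThan_atLeast0 row_def)
      also have "\<dots> = m * y0 i" using r0[OF i] by (simp add: r_def Ay_def)
      finally show "(adj_mat n X *\<^sub>v v) $ i = (m \<cdot>\<^sub>v v) $ i" using i by (simp add: v_def)
    qed
    then show ?thesis unfolding eigenvalue_def eigenvector_def using A v v0
      by (auto simp: adj_mat_def)
  qed
  have "m \<noteq> real d" using mle0 d0 by simp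
  hence mlam: "\<bar>m\<bar> \<le> lam" by (rule ev[OF eig])
  show ?thesis
  proof (intro conjI allI impI)
    show "lam \<ge> 0" using mlam by simp
    fix y :: "nat \<Rightarrow> real" assume "(\<Sum>i<n. y i) = 0"
    hence "Bf n X y y \<ge> m * (\<Sum>i<n. (y i)\<^sup>2)" by (rule scale)
    moreover have "m * (\<Sum>i<n. (y i)\<^sup>2) \<ge> - lam * (\<Sum>i<n. (y i)\<^sup>2)"
      using mlam by (intro mult_right_mono) (auto intro: sum_nonneg)
    ultimately show "Bf n X y y \<ge> - lam * (\<Sum>i<n. (y i)\<^sup>2)" by linarith
  qed
qed

lemma cnt_regular:
  assumes reg: "regular n X d" and sg: "simple_graph {0..<n} X" and v: "v < n"
  shows "cnt X {0..<n} k v = d ^ k"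
  using v
proof (induction k arbitrary: v)
  case 0 then show ?case by (simp add: cnt_0)
next
  case (Suc k)
  have "cnt X {0..<n} (Suc k) v = (\<Sum>u\<in>{u\<in>{0..<n}. X v u}. cnt X {0..<n} k u)"
    by (rule cnt_Suc) simp
  also have "\<dots> = (\<Sum>u\<in>{u\<in>{0..<n}. X v u}. d ^ k)"
    by (intro sum.cong refl Suc.IH) auto
  also have "\<dots> = card {u\<in>{0..<n}. X v u} * d ^ k" by simp
  also have "{u\<in>{0..<n}. X v u} = {u. u < n \<and> X v u}" by auto
  also have "card \<dots> = d" using reg Suc.prems by (simp add: regular_def)
  finally show ?case by simp
qed

lemma card_walks_Suc:
  assumes reg: "regular n X d" and sg: "simple_graph {0..<n} X"
  shows "card (wk X {0..<n} (Suc k)) = n * d ^ k"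
proof -
  have "card (wk X {0..<n} (Suc k)) = (\<Sum>v\<in>{0..<n}. cnt X {0..<n} k v)" by (rule wk_Suc) simp
  also have "\<dots> = (\<Sum>v\<in>{0..<n}. d ^ k)" by (intro sum.cong refl cnt_regular[OF reg sg]) auto
  finally show ?thesis by simp
qed

lemma sum_ind:
  fixes f :: "nat \<Rightarrow> real"
  assumes "S \<subseteq> {..<n}"
  shows "(\<Sum>i<n. (if i \<in> S then 1 else 0) * f i) = (\<Sum>i\<in>S. (f i::real))"
proof -
  have "(\<Sum>i<n. (if i \<in> S then 1 else 0) * f i) = (\<Sum>i<n. if i \<in> S then f i else 0)"
    by (intro sum.cong) auto
  also have "\<dots> = sum f ({..<n} \<inter> S)" using sum.inter_restrict[OF finite_lessThan, of f n S] by (rule sym)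
  also have "{..<n} \<inter> S = S" using assms by auto
  finally show ?thesis .
qed

lemma mixing:
  assumes X: "expander n X d lam" and d0: "d > 0" and n0: "n > 0" and S: "S \<subseteq> {0..<n}"
  defines "s \<equiv> real (card S)"
  defines "\<mu> \<equiv> s / real n"
  shows "lam \<ge> 0" "real (\<Sum>v\<in>S. card {u\<in>S. X v u}) \<ge> \<mu> * real d * s - lam * s * (1 - \<mu>)"
proof -
  have R: "lam \<ge> 0 \<and> (\<forall>y. (\<Sum>i<n. y i) = 0 \<longrightarrow> Bf n X y y \<ge> - lam * (\<Sum>i<n. (y i)\<^sup>2))"
    by (rule rayleigh[OF X d0 n0])
  then show "lam \<ge> 0" by simp
  have sg: "simple_graph {0..<n} X" and reg: "regular n X d" using X unfolding expander_def by auto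
  have sym: "X i j \<Longrightarrow> X j i" for i j using sg unfolding simple_graph_def by auto
  have amsym: "am X i j = am X j i" for i j unfolding am_def using sym by auto
  have deg: "card {u. u < n \<and> X v u} = d" if "v < n" for v using reg that unfolding regular_def by auto
  have rowsum: "(\<Sum>j<n. am X i j) = real d" if "i < n" for i
  proof -
    have "(\<Sum>j<n. am X i j) = (\<Sum>j<n. am X j i)" by (simp add: amsym)
    also have "\<dots> = real (card {j\<in>{..<n}. X j i})" by (rule sum_indicator_card) simp
    also have "{j\<in>{..<n}. X j i} = {u. u < n \<and> X i u}" using sym by auto
    finally show ?thesis using deg[OF that] by simp
  qed
  have finS: "finite S" using S finite_subset by blast
  define u where "u i = (if i \<in> S then 1 else (0::real))" for i
  define one where "one i = (1::real)" for i :: nat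
  have Sn: "S \<inter> {..<n} = S" using S by auto
  have S': "S \<subseteq> {..<n}" using S by auto
  have su: "(\<Sum>i<n. u i) = s"
    using sum_ind[OF S', of "\<lambda>_. 1"] unfolding u_def s_def by simp
  have su2: "(\<Sum>i<n. (u i)\<^sup>2) = s"
  proof -
    have "(\<Sum>i<n. (u i)\<^sup>2) = (\<Sum>i<n. u i)" by (intro sum.cong refl) (simp add: u_def)
    then show ?thesis using su by simp
  qed
  have sn: "s \<le> real n" unfolding s_def using card_mono[OF _ S] by simp
  have n0': "real n > 0" using n0 by simp
  have Buu: "Bf n X u u = real (\<Sum>v\<in>S. card {w\<in>S. X v w})"
  proof -
    have "Bf n X u u = (\<Sum>i<n. u i * (\<Sum>j<n. am X i j * u j))" by (rule Bf_left)
    also have "\<dots> = (\<Sum>i\<in>S. (\<Sum>j<n. am X i j * u j))"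
      unfolding u_def by (rule sum_ind[OF S'])
    also have "\<dots> = (\<Sum>i\<in>S. real (card {w\<in>S. X i w}))"
    proof (intro sum.cong refl)
      fix i assume "i \<in> S"
      have "(\<Sum>j<n. am X i j * u j) = (\<Sum>j\<in>S. am X i j)"
        using sum_ind[OF S', of "am X i"] unfolding u_def by (simp add: mult.commute)
      also have "\<dots> = (\<Sum>j\<in>S. am X j i)" by (simp add: amsym)
      also have "\<dots> = real (card {j\<in>S. X j i})" by (rule sum_indicator_card[OF finS])
      also have "{j\<in>S. X j i} = {w\<in>S. X i w}" using sym by auto
      finally show "(\<Sum>j<n. am X i j * u j) = real (card {w\<in>S. X i w})" .
    qed
    finally show ?thesis by simp
  qed
  have B1u: "Bf n X one u = s * real d"
  proof -
    have "Bf n X one u = Bf n X u one" by (rule Bf_sym[OF amsym])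
    also have "\<dots> = (\<Sum>i<n. u i * (\<Sum>j<n. am X i j * one j))" by (rule Bf_left)
    also have "\<dots> = (\<Sum>i<n. u i * real d)" by (intro sum.cong refl) (simp add: one_def rowsum)
    also have "\<dots> = s * real d" using su by (simp add: sum_distrib_right[symmetric])
    finally show ?thesis .
  qed
  have Bu1: "Bf n X u one = s * real d" using B1u Bf_sym[OF amsym] by metis
  have B11: "Bf n X one one = real n * real d"
  proof -
    have "Bf n X one one = (\<Sum>i<n. one i * (\<Sum>j<n. am X i j * one j))" by (rule Bf_left)
    also have "\<dots> = (\<Sum>i<n. real d)" by (intro sum.cong refl) (simp add: one_def rowsum)
    finally show ?thesis by simp
  qed
  define y where "y i = u i + (- \<mu>) * one i" for i
  have ysum: "(\<Sum>i<n. y i) = 0"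
    unfolding y_def one_def using su n0' by (simp add: sum_subtractf \<mu>_def)
  have "Bf n X y y \<ge> - lam * (\<Sum>i<n. (y i)\<^sup>2)" using R ysum by blast
  moreover have "Bf n X y y = real (\<Sum>v\<in>S. card {w\<in>S. X v w}) - \<mu> * real d * s"
  proof -
    have "Bf n X y y = Bf n X u u + (- \<mu>) * (Bf n X u one + Bf n X one u) + (- \<mu>)\<^sup>2 * Bf n X one one"
      unfolding y_def by (rule Bf_expand)
    also have "\<dots> = real (\<Sum>v\<in>S. card {w\<in>S. X v w}) - 2 * \<mu> * s * real d + \<mu>\<^sup>2 * real n * real d"
      by (simp add: Buu Bu1 B1u B11 algebra_simps)
    also have "\<mu>\<^sup>2 * real n * real d = \<mu> * real d * s" using n0' by (simp add: \<mu>_def power2_eq_square)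
    finally show ?thesis by simp
  qed
  moreover have "(\<Sum>i<n. (y i)\<^sup>2) = s * (1 - \<mu>)"
  proof -
    have "(\<Sum>i<n. (y i)\<^sup>2) = (\<Sum>i<n. (u i)\<^sup>2) + (- \<mu>) * (2 * (\<Sum>i<n. u i * one i)) + (- \<mu>)\<^sup>2 * (\<Sum>i<n. (one i)\<^sup>2)"
      unfolding y_def by (rule sum_sq_expand)
    also have "\<dots> = s - 2 * \<mu> * s + \<mu>\<^sup>2 * real n" using su su2 by (simp add: one_def)
    also have "\<mu>\<^sup>2 * real n = \<mu> * s" using n0' by (simp add: \<mu>_def power2_eq_square)
    finally show ?thesis by (simp add: algebra_simps)
  qed
  ultimately show "real (\<Sum>v\<in>S. card {u\<in>S. X v u}) \<ge> \<mu> * real d * s - lam * s * (1 - \<mu>)"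
    by (simp add: algebra_simps)
qed

lemma walk_bound:
  assumes X: "expander n X d lam" and d0: "d > 0" and n0: "n > 0" and S: "S \<subseteq> {0..<n}"
    and b0: "\<beta> \<ge> 0" and bdef: "\<beta> \<le> real (card S) / real n - 2 * (lam / real d)"
  shows "real (card (wk X S (Suc k))) \<ge> real n * real d ^ k * \<beta> ^ Suc k"
proof -
  define s where "s = real (card S)"
  define \<mu> where "\<mu> = s / real n"
  define E where "E = real (\<Sum>v\<in>S. card {u\<in>S. X v u})"
  have lam0: "lam \<ge> 0" and mix: "E \<ge> \<mu> * real d * s - lam * s * (1 - \<mu>)"
    using mixing[OF X d0 n0 S] by (simp_all add: E_def \<mu>_def s_def)
  have sg: "simple_graph {0..<n} X" using X unfolding expander_def by auto
  have sym: "X i j \<Longrightarrow> X j i" for i j using sg unfolding simple_graph_def by auto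
  have finS: "finite S" using S finite_subset by blast
  have n0': "real n > 0" using n0 by simp
  have d0': "real d > 0" using d0 by simp
  have sn: "s \<le> real n" unfolding s_def using card_mono[OF _ S] by simp
  have mu1: "\<mu> \<le> 1" "\<mu> \<ge> 0" using sn n0' by (auto simp: \<mu>_def s_def)
  have bmu: "\<beta> \<le> \<mu> - 2 * (lam / real d)" using bdef by (simp add: \<mu>_def s_def)
  show ?thesis
  proof (cases "card S = 0")
    case True
    hence "\<beta> \<le> - 2 * (lam / real d)" using bmu by (simp add: \<mu>_def s_def)
    moreover have "lam / real d \<ge> 0" using lam0 d0' by simp
    ultimately have "\<beta> = 0" using b0 by linarith
    then show ?thesis by simp
  next
    case False
    hence Sne: "S \<noteq> {}" by auto
    have s0: "s > 0" using False by (simp add: s_def)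
    have "real (card (wk X S (Suc k))) = real (\<Sum>v\<in>S. cnt X S k v)" by (simp add: wk_Suc[OF finS])
    also have "\<dots> \<ge> s * (E / s) ^ k"
      using blakley_roy[where X=X and k=k and S=S, OF finS Sne sym] by (simp add: s_def E_def)
    finally have w1: "real (card (wk X S (Suc k))) \<ge> s * (E / s) ^ k" .
    have "E / s \<ge> \<mu> * real d - lam * (1 - \<mu>)"
      using mix s0 by (simp add: field_simps)
    moreover have "lam * (1 - \<mu>) \<le> lam * 2" using lam0 mu1 by (intro mult_left_mono) auto
    moreover have "real d * \<beta> \<le> \<mu> * real d - 2 * lam"
    proof -
      have "real d * \<beta> \<le> real d * (\<mu> - 2 * (lam / real d))" using mult_left_mono[OF bmu, of "real d"] d0' by simp
      also have "\<dots> = \<mu> * real d - 2 * lam" using d0' by (simp add: field_simps)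
      finally show ?thesis .
    qed
    ultimately have Eb: "E / s \<ge> real d * \<beta>" by linarith
    have "(real d * \<beta>) ^ k \<le> (E / s) ^ k" using Eb b0 d0' by (intro power_mono) auto
    hence w2: "s * (real d * \<beta>) ^ k \<le> s * (E / s) ^ k" using s0 by (intro mult_left_mono) auto
    have "real n * real d ^ k * \<beta> ^ Suc k = (real n * \<beta>) * (real d * \<beta>) ^ k"
      by (simp add: power_mult_distrib)
    also have "\<dots> \<le> s * (real d * \<beta>) ^ k"
    proof (intro mult_right_mono)
      have "\<beta> \<le> \<mu>" using bmu lam0 d0' by (smt (verit) divide_nonneg_pos)
      then show "real n * \<beta> \<le> s" using n0' by (simp add: \<mu>_def field_simps)
      show "0 \<le> (real d * \<beta>) ^ k" using b0 by simp
    qed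
    finally show ?thesis using w1 w2 by linarith
  qed
qed

definition rstep :: "'a set \<Rightarrow> 'a set \<Rightarrow> bool" where
  "rstep A B \<longleftrightarrow> (\<exists>v. (v \<notin> A \<and> B = insert v A) \<or> (v \<notin> B \<and> A = insert v B))"

lemma reconf_seq_alt:
  "reconf_seq V E C C' xs \<longleftrightarrow> xs \<noteq> [] \<and> hd xs = C \<and> last xs = C' \<and>
     (\<forall>D\<in>set xs. is_clique V E D) \<and> successively rstep xs"
  unfolding reconf_seq_def successively_conv_nth rstep_def by blast

lemma rstep_sym: "rstep A B = rstep B A"
  unfolding rstep_def by blast

lemma reconf_seq_rev:
  assumes "reconf_seq V E C C' xs" shows "reconf_seq V E C' C (rev xs)"
proof -
  have "successively rstep (rev xs)" using assms
    unfolding reconf_seq_alt successively_rev by (simp add: rstep_sym)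
  then show ?thesis using assms unfolding reconf_seq_alt by (auto simp: hd_rev last_rev)
qed

lemma reconf_seq_append:
  assumes "reconf_seq V E A B xs" "reconf_seq V E B C ys"
  shows "reconf_seq V E A C (xs @ tl ys)"
proof -
  obtain y ys' where ys: "ys = y # ys'" using assms(2) unfolding reconf_seq_alt by (cases ys) auto
  have yB: "y = B" using assms(2) ys unfolding reconf_seq_alt by simp
  have s1: "successively rstep xs" "successively rstep (y # ys')"
    using assms ys unfolding reconf_seq_alt by auto
  have lx: "last xs = B" "xs \<noteq> []" using assms(1) unfolding reconf_seq_alt by auto
  have "successively rstep (xs @ ys')"
  proof (cases ys')
    case Nil then show ?thesis using s1 by simp
  next
    case (Cons z zs)
    then show ?thesis using s1 lx yB by (auto simp: successively_append_iff)
  qed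
  moreover have "last (xs @ ys') = C"
    using assms(2) ys lx yB unfolding reconf_seq_alt by (cases ys') auto
  ultimately show ?thesis using assms ys lx unfolding reconf_seq_alt by auto
qed

lemma chain_up:
  assumes "finite Q" "P \<subseteq> Q" "\<And>Z. P \<subseteq> Z \<Longrightarrow> Z \<subseteq> Q \<Longrightarrow> is_clique V E Z"
  shows "\<exists>xs. reconf_seq V E P Q xs \<and> (\<forall>Z\<in>set xs. P \<subseteq> Z \<and> Z \<subseteq> Q)"
  using assms
proof (induction "card (Q - P)" arbitrary: Q)
  case 0
  hence "Q = P" using finite_subset[of "Q - P" Q] by auto
  then show ?case using 0 by (intro exI[of _ "[P]"]) (auto simp: reconf_seq_def)
next
  case (Suc m)
  obtain q where q: "q \<in> Q" "q \<notin> P"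
    using Suc.hyps(2) by (metis Diff_eq_empty_iff card.empty nat.distinct(1) subsetI)
  define Q' where "Q' = Q - {q}"
  have m: "m = card (Q' - P)" using Suc.hyps(2) q Suc.prems(1)
    by (simp add: Q'_def Diff_insert2[symmetric] card_Diff_singleton_if)
  have IH: "\<exists>xs. reconf_seq V E P Q' xs \<and> (\<forall>Z\<in>set xs. P \<subseteq> Z \<and> Z \<subseteq> Q')"
  proof (rule Suc.hyps(1)[OF m])
    show "finite Q'" using Suc.prems by (simp add: Q'_def)
    show "P \<subseteq> Q'" using Suc.prems q by (auto simp: Q'_def)
    fix Z assume Z: "P \<subseteq> Z" "Z \<subseteq> Q'"
    have "Z \<subseteq> Q" using Z(2) by (auto simp: Q'_def)
    then show "is_clique V E Z" by (rule Suc.prems(3)[OF Z(1)])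
  qed
  then obtain xs where xs: "reconf_seq V E P Q' xs" "\<forall>Z\<in>set xs. P \<subseteq> Z \<and> Z \<subseteq> Q'" by blast
  have st: "reconf_seq V E Q' Q [Q', Q]"
  proof -
    have c1: "is_clique V E Q'" by (rule Suc.prems(3)) (use Suc.prems(2) q in \<open>auto simp: Q'_def\<close>)
    have c2: "is_clique V E Q" by (rule Suc.prems(3)) (use Suc.prems(2) in auto)
    have "Q = insert q Q'" "q \<notin> Q'" using q by (auto simp: Q'_def)
    hence "rstep Q' Q" unfolding rstep_def by blast
    then show ?thesis unfolding reconf_seq_alt using c1 c2 by simp
  qed
  have "reconf_seq V E P Q (xs @ tl [Q', Q])" by (rule reconf_seq_append[OF xs(1) st])
  moreover have "\<forall>Z\<in>set (xs @ tl [Q', Q]). P \<subseteq> Z \<and> Z \<subseteq> Q"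
    using xs(2) Suc.prems(2) by (auto simp: Q'_def)
  ultimately show ?case by blast
qed

lemma reconf_lift:
  fixes f :: "'a set \<Rightarrow> 'b set" and R :: real
  assumes "reconf_seq V E C C' xs"
    and mono: "\<And>A B. A \<subseteq> B \<Longrightarrow> f A \<subseteq> f B"
    and fin: "\<And>A. A \<in> set xs \<Longrightarrow> finite (f A)"
    and cl: "\<And>A Z. A \<in> set xs \<Longrightarrow> Z \<subseteq> f A \<Longrightarrow> is_clique V2 E2 Z"
    and big: "\<And>A. A \<in> set xs \<Longrightarrow> R \<le> real (card (f A))"
  shows "\<exists>ys. reconf_seq V2 E2 (f C) (f C') ys \<and> (\<forall>Z\<in>set ys. R \<le> real (card Z))"
  using assms(1) fin cl big
proof (induction xs arbitrary: C)
  case Nil then show ?case by (simp add: reconf_seq_def)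
next
  case (Cons a xs)
  have aC: "a = C" using Cons.prems(1) by (simp add: reconf_seq_def)
  show ?case
  proof (cases xs)
    case Nil
    hence "C' = C" using Cons.prems(1) aC by (simp add: reconf_seq_def)
    then show ?thesis using Cons.prems aC Nil
      by (intro exI[of _ "[f C]"]) (auto simp: reconf_seq_def)
  next
    case (Cons b xs')
    have sx: "reconf_seq V E b C' xs" using Cons.prems(1) Cons unfolding reconf_seq_alt
      by (auto simp: successively_Cons)
    have stp: "rstep a b" using Cons.prems(1) Cons unfolding reconf_seq_alt by auto
    obtain ys2 where ys2: "reconf_seq V2 E2 (f b) (f C') ys2" "\<forall>Z\<in>set ys2. R \<le> real (card Z)"
    proof -
      have "\<exists>ys. reconf_seq V2 E2 (f b) (f C') ys \<and> (\<forall>Z\<in>set ys. R \<le> real (card Z))"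
      proof (rule Cons.IH[OF sx])
        show "\<And>A. A \<in> set xs \<Longrightarrow> finite (f A)" using Cons.prems(2) by simp
        show "\<And>A Z. A \<in> set xs \<Longrightarrow> Z \<subseteq> f A \<Longrightarrow> is_clique V2 E2 Z" using Cons.prems(3) by (metis list.set_intros(2))
        show "\<And>A. A \<in> set xs \<Longrightarrow> R \<le> real (card (f A))" using Cons.prems(4) by simp
      qed
      then show ?thesis using that by blast
    qed
    have ain: "a \<in> set (a # xs)" and bin: "b \<in> set (a # xs)" using Cons by auto
    have "\<exists>ys1. reconf_seq V2 E2 (f a) (f b) ys1 \<and> (\<forall>Z\<in>set ys1. R \<le> real (card Z))"
    proof -
      from stp obtain v where "(v \<notin> a \<and> b = insert v a) \<or> (v \<notin> b \<and> a = insert v b)"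
        unfolding rstep_def by blast
      then show ?thesis
      proof
        assume "v \<notin> a \<and> b = insert v a"
        hence ab: "f a \<subseteq> f b" using mono[of a b] by auto
        obtain ys1 where ys1: "reconf_seq V2 E2 (f a) (f b) ys1" "\<forall>Z\<in>set ys1. f a \<subseteq> Z \<and> Z \<subseteq> f b"
          using chain_up[OF Cons.prems(2)[OF bin] ab, of V2 E2] Cons.prems(3)[OF bin] by blast
        have "R \<le> real (card Z)" if "Z \<in> set ys1" for Z
        proof -
          have "card (f a) \<le> card Z" using ys1(2) that Cons.prems(2)[OF bin]
            by (meson card_mono finite_subset)
          then show ?thesis using Cons.prems(4)[OF ain] by linarith
        qed
        then show ?thesis using ys1 by blast
      next
        assume "v \<notin> b \<and> a = insert v b"
        hence ba: "f b \<subseteq> f a" using mono[of b a] by auto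
        obtain ys1 where ys1: "reconf_seq V2 E2 (f b) (f a) ys1" "\<forall>Z\<in>set ys1. f b \<subseteq> Z \<and> Z \<subseteq> f a"
          using chain_up[OF Cons.prems(2)[OF ain] ba, of V2 E2] Cons.prems(3)[OF ain] by blast
        have "R \<le> real (card Z)" if "Z \<in> set ys1" for Z
        proof -
          have "card (f b) \<le> card Z" using ys1(2) that Cons.prems(2)[OF ain]
            by (meson card_mono finite_subset)
          then show ?thesis using Cons.prems(4)[OF bin] by linarith
        qed
        then show ?thesis using reconf_seq_rev[OF ys1(1)] by (intro exI[of _ "rev ys1"]) auto
      qed
    qed
    then obtain ys1 where ys1: "reconf_seq V2 E2 (f a) (f b) ys1" "\<forall>Z\<in>set ys1. R \<le> real (card Z)" by blast
    have r1: "reconf_seq V2 E2 (f C) (f C') (ys1 @ tl ys2)"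
      using reconf_seq_append[OF ys1(1) ys2(1)] aC by simp
    have r2: "\<forall>Z\<in>set (ys1 @ tl ys2). R \<le> real (card Z)"
    proof -
      have "set (tl ys2) \<subseteq> set ys2" by (cases ys2) auto
      then show ?thesis using ys1(2) ys2(2) by auto
    qed
    show ?thesis by (rule exI[of _ "ys1 @ tl ys2"]) (rule conjI[OF r1 r2])
  qed
qed

lemma clique_subset: "is_clique V E C \<Longrightarrow> Z \<subseteq> C \<Longrightarrow> is_clique V E Z"
  unfolding is_clique_def by (meson subsetD subset_trans)

lemma reconf_exists:
  assumes "finite C" "finite C'" "is_clique V E C" "is_clique V E C'"
  shows "\<exists>xs. reconf_seq V E C C' xs"
proof -
  have "\<exists>xs. reconf_seq V E {} C xs \<and> (\<forall>Z\<in>set xs. {} \<subseteq> Z \<and> Z \<subseteq> C)"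
  proof (rule chain_up[OF assms(1)])
    show "{} \<subseteq> C" by simp
    show "is_clique V E Z" if "{} \<subseteq> Z" "Z \<subseteq> C" for Z by (rule clique_subset[OF assms(3) that(2)])
  qed
  then obtain xs where xs: "reconf_seq V E {} C xs" by blast
  have "\<exists>xs. reconf_seq V E {} C' xs \<and> (\<forall>Z\<in>set xs. {} \<subseteq> Z \<and> Z \<subseteq> C')"
  proof (rule chain_up[OF assms(2)])
    show "{} \<subseteq> C'" by simp
    show "is_clique V E Z" if "{} \<subseteq> Z" "Z \<subseteq> C'" for Z by (rule clique_subset[OF assms(4) that(2)])
  qed
  then obtain ys where ys: "reconf_seq V E {} C' ys" by blast
  show ?thesis using reconf_seq_append[OF reconf_seq_rev[OF xs] ys] by blast
qed

lemma reconf_vals_finite: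
  assumes "finite V"
  shows "finite {Min (card ` set xs) | xs. reconf_seq V E C C' xs}"
proof (rule finite_subset[of _ "{..card V}"])
  show "{Min (card ` set xs) | xs. reconf_seq V E C C' xs} \<subseteq> {..card V}"
  proof
    fix k assume "k \<in> {Min (card ` set xs) | xs. reconf_seq V E C C' xs}"
    then obtain xs where xs: "reconf_seq V E C C' xs" "k = Min (card ` set xs)" by blast
    have ne: "xs \<noteq> []" using xs by (simp add: reconf_seq_def)
    have "hd xs \<in> set xs" using ne by simp
    hence k1: "k \<le> card (hd xs)" using xs(2) by simp
    have "is_clique V E (hd xs)" using xs(1) \<open>hd xs \<in> set xs\<close> unfolding reconf_seq_def by blast
    hence "hd xs \<subseteq> V" unfolding is_clique_def by blast
    hence "card (hd xs) \<le> card V" using assms card_mono by blast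
    then show "k \<in> {..card V}" using k1 by simp
  qed
qed simp

lemma reconf_val_ge:
  assumes "finite V" "reconf_seq V E C C' xs"
  shows "Min (card ` set xs) \<le> reconf_val V E C C'"
  unfolding reconf_val_def using reconf_vals_finite[OF assms(1)] assms(2)
  by (intro Max_ge) auto

lemma reconf_val_attained:
  assumes "finite V" "reconf_seq V E C C' xs0"
  shows "\<exists>xs. reconf_seq V E C C' xs \<and> Min (card ` set xs) = reconf_val V E C C'"
proof -
  have "reconf_val V E C C' \<in> {Min (card ` set xs) | xs. reconf_seq V E C C' xs}"
    unfolding reconf_val_def using reconf_vals_finite[OF assms(1)] assms(2)
    by (intro Max_in) auto
  then show ?thesis by auto
qed

theorem mainTheorem8:
  fixes n d :: nat and lam :: real and E X :: "nat \<Rightarrow> nat \<Rightarrow> bool"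
    and Cs Cg :: "nat set"
  defines "V \<equiv> {0..<n}"
  defines "\<omega> \<equiv> clique_number V E"
  defines "l \<equiv> nat \<lceil>log 2 (real n)\<rceil>"
  defines "W \<equiv> walks n X l"
  assumes G: "simple_graph V E"
    and Cs: "is_clique V E Cs" "card Cs = \<omega>"
    and Cg: "is_clique V E Cg" "card Cg = \<omega>"
    and X: "expander n X d lam"
    and base_nonneg: "(real \<omega> - 1) / real (card V) - 2 * (lam / real d) \<ge> 0"
    and hyp: "real (reconf_val V E Cs Cg) \<ge> real \<omega> - 1"
  shows "real (reconf_val W (walk_adj E n) (D_of n X l Cs) (D_of n X l Cg))
           \<ge> real (card W) * ((real \<omega> - 1) / real (card V) - 2 * (lam / real d)) ^ l"
proof -
  define base where "base = (real \<omega> - 1) / real (card V) - 2 * (lam / real d)"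
  define R where "R = real (card W) * base ^ l"
  have finV: "finite V" by (simp add: V_def)
  have cardV: "card V = n" by (simp add: V_def)
  have sgX: "simple_graph {0..<n} X" and reg: "regular n X d" using X unfolding expander_def by auto
  have Wwk: "W = wk X {0..<n} l" by (simp add: W_def walks_def wk_def)
  have finW: "finite W" unfolding Wwk wk_def by (rule finite_lists_in) simp
  have Dwk: "D_of n X l C = wk X C l" if "C \<subseteq> V" for C
    using that unfolding D_of_def walks_def wk_def V_def by auto
  have KC: "R \<le> real (card (D_of n X l C))" if C: "is_clique V E C" "real (card C) \<ge> real \<omega> - 1" for C
  proof -
    have CV: "C \<subseteq> V" using C(1) by (simp add: is_clique_def)
    have finC: "finite C" using CV finV finite_subset by blast
    show ?thesis
    proof (cases l)
      case 0
      have "W = {[]}" unfolding Wwk wk_def 0 by auto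
      moreover have "D_of n X l C = {[]}"
      proof -
        have "wk X C l = {[]}" unfolding wk_def 0 by auto
        then show ?thesis using Dwk[OF CV] by simp
      qed
      ultimately show ?thesis by (simp add: R_def 0)
    next
      case (Suc k)
      have cW: "card W = n * d ^ k" unfolding Wwk Suc by (rule card_walks_Suc[OF reg sgX])
      show ?thesis
      proof (cases "n = 0")
        case True
        then show ?thesis by (simp add: R_def cW)
      next
        case False
        hence n0: "n > 0" by simp
        show ?thesis
        proof (cases "d = 0")
          case True
          show ?thesis
          proof (cases k)
            case 0
            have "card (D_of n X l C) = card (wk X C (Suc 0))" using Dwk[OF CV] Suc 0 by simp
            also have "\<dots> = card C" unfolding wk_Suc[OF finC] by (simp add: cnt_0)
            finally have "card (D_of n X l C) = card C" .
            moreover have "R = real \<omega> - 1"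
              using n0 True by (simp add: R_def cW Suc 0 base_def cardV)
            ultimately show ?thesis using C(2) by simp
          next
            case (Suc k')
            then show ?thesis using True by (simp add: R_def cW)
          qed
        next
          case False
          hence d0: "d > 0" by simp
          have "real n * real d ^ k * base ^ Suc k \<le> real (card (wk X C (Suc k)))"
          proof (rule walk_bound[OF X d0 n0])
            show "C \<subseteq> {0..<n}" using CV by (simp add: V_def)
            show "base \<ge> 0" using base_nonneg by (simp add: base_def)
            show "base \<le> real (card C) / real n - 2 * (lam / real d)"
              using C(2) n0 by (simp add: base_def cardV divide_right_mono)
          qed
          then show ?thesis using Dwk[OF CV] by (simp add: R_def cW Suc)
        qed
      qed
    qed
  qed
  have finCs: "finite Cs" "finite Cg" using Cs(1) Cg(1) finV finite_subset
    by (auto simp: is_clique_def)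
  obtain xs0 where "reconf_seq V E Cs Cg xs0" using reconf_exists[OF finCs Cs(1) Cg(1)] by blast
  then obtain xs where xs: "reconf_seq V E Cs Cg xs" and xsmin: "Min (card ` set xs) = reconf_val V E Cs Cg"
    using reconf_val_attained[OF finV] by blast
  have xsne: "xs \<noteq> []" using xs by (simp add: reconf_seq_def)
  have xsbig: "real (card A) \<ge> real \<omega> - 1" if "A \<in> set xs" for A
  proof -
    have "Min (card ` set xs) \<le> card A" using that by simp
    then show ?thesis using hyp xsmin by linarith
  qed
  have xscl: "is_clique V E A" if "A \<in> set xs" for A using xs that by (simp add: reconf_seq_def)
  have "\<exists>ys. reconf_seq W (walk_adj E n) (D_of n X l Cs) (D_of n X l Cg) ys \<and> (\<forall>Z\<in>set ys. R \<le> real (card Z))"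
  proof (rule reconf_lift[OF xs])
    show "D_of n X l A \<subseteq> D_of n X l B" if "A \<subseteq> B" for A B using that by (auto simp: D_of_def)
    show "finite (D_of n X l A)" for A
      by (rule finite_subset[OF _ finW]) (auto simp: D_of_def W_def)
    show "is_clique W (walk_adj E n) Z" if A: "A \<in> set xs" and Z: "Z \<subseteq> D_of n X l A" for A Z
      unfolding is_clique_def
    proof (intro conjI ballI impI)
      show "Z \<subseteq> W" using Z by (auto simp: D_of_def W_def)
      fix w1 w2 assume w: "w1 \<in> Z" "w2 \<in> Z" "w1 \<noteq> w2"
      have "set w1 \<union> set w2 \<subseteq> A" using w Z by (auto simp: D_of_def)
      hence "is_clique V E (set w1 \<union> set w2)" by (rule clique_subset[OF xscl[OF A]])
      then show "walk_adj E n w1 w2" using w(3) by (simp add: walk_adj_def V_def)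
    qed
    show "R \<le> real (card (D_of n X l A))" if "A \<in> set xs" for A
      by (rule KC[OF xscl[OF that] xsbig[OF that]])
  qed
  then obtain ys where ys: "reconf_seq W (walk_adj E n) (D_of n X l Cs) (D_of n X l Cg) ys"
    and ysb: "\<forall>Z\<in>set ys. R \<le> real (card Z)" by blast
  have yne: "ys \<noteq> []" using ys by (simp add: reconf_seq_def)
  have "Min (card ` set ys) \<in> card ` set ys" using yne by (intro Min_in) auto
  then obtain Z where "Z \<in> set ys" "Min (card ` set ys) = card Z" by auto
  hence "R \<le> real (Min (card ` set ys))" using ysb by simp
  also have "Min (card ` set ys) \<le> reconf_val W (walk_adj E n) (D_of n X l Cs) (D_of n X l Cg)"
    by (rule reconf_val_ge[OF finW ys])
  finally show ?thesis by (simp add: R_def base_def)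
qed

end
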